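(* For every integer $d \ge 2$, there exist two monoids $H, H' \in \mathcal{C}_d$ with $\mathcal{L}(H) = \mathcal{L}(H')$ that are not isomorphic; that is, the system of sets of lengths does not characterize monoids in $\mathcal{C}_d$ up to isomorphism.
   Context: Monoids are commutative, cancellative, reduced. $\mathcal{C}_d$ is the collection of all rank-$d$ submonoids of free commutative monoids of finite rank (rank = rank of the Grothendieck group). For an atomic monoid $H$ and $x\in H$, $\mathsf{L}(x)$ is the set of all $n$ such that $x$ is a sum of $n$ atoms; $\mathcal{L}(H)=\{\mathsf{L}(x)\mid x\in H\}$ is the system of sets of lengths. *)

theory Defs
  imports Main "HOL-Library.Function_Algebras"
begin

text \<open>Elements of the free commutative monoid N^n are modelled as functions
  nat => nat vanishing outside {..<n}; addition is pointwise.\<close>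

definition submonoid_of_free :: "nat \<Rightarrow> (nat \<Rightarrow> nat) set \<Rightarrow> bool" where
  "submonoid_of_free n H \<longleftrightarrow>
     H \<subseteq> {x. \<forall>i\<ge>n. x i = 0} \<and> (0::nat \<Rightarrow> nat) \<in> H \<and>
     (\<forall>x\<in>H. \<forall>y\<in>H. x + y \<in> H)"

definition groth_group :: "(nat \<Rightarrow> nat) set \<Rightarrow> (nat \<Rightarrow> int) set" where
  "groth_group H = {(\<lambda>i. int (x i) - int (y i)) | x y. x \<in> H \<and> y \<in> H}"

definition int_lin_indep :: "(nat \<Rightarrow> int) list \<Rightarrow> bool" where
  "int_lin_indep vs \<longleftrightarrow>
     (\<forall>c :: nat \<Rightarrow> int. (\<forall>i. (\<Sum>j<length vs. c j * (vs ! j) i) = 0) \<longrightarrow>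
        (\<forall>j<length vs. c j = 0))"

definition has_rank :: "(nat \<Rightarrow> nat) set \<Rightarrow> nat \<Rightarrow> bool" where
  "has_rank H d \<longleftrightarrow>
     (\<exists>vs. length vs = d \<and> set vs \<subseteq> groth_group H \<and> int_lin_indep vs) \<and>
     (\<forall>vs. set vs \<subseteq> groth_group H \<and> int_lin_indep vs \<longrightarrow> length vs \<le> d)"

definition in_C :: "nat \<Rightarrow> (nat \<Rightarrow> nat) set \<Rightarrow> bool" where
  "in_C d H \<longleftrightarrow> (\<exists>n. submonoid_of_free n H) \<and> has_rank H d"

definition atoms :: "(nat \<Rightarrow> nat) set \<Rightarrow> (nat \<Rightarrow> nat) set" where
  "atoms H = {a \<in> H. a \<noteq> 0 \<and> \<not> (\<exists>b\<in>H. \<exists>c\<in>H. b \<noteq> 0 \<and> c \<noteq> 0 \<and> a = b + c)}"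

definition lengths :: "(nat \<Rightarrow> nat) set \<Rightarrow> (nat \<Rightarrow> nat) \<Rightarrow> nat set" where
  "lengths H x = {k. \<exists>as. length as = k \<and> set as \<subseteq> atoms H \<and> sum_list as = x}"

definition system_of_lengths :: "(nat \<Rightarrow> nat) set \<Rightarrow> nat set set" where
  "system_of_lengths H = lengths H ` H"

definition monoid_iso :: "(nat \<Rightarrow> nat) set \<Rightarrow> (nat \<Rightarrow> nat) set \<Rightarrow> bool" where
  "monoid_iso H H' \<longleftrightarrow>
     (\<exists>f. bij_betw f H H' \<and> (\<forall>x\<in>H. \<forall>y\<in>H. f (x + y) = f x + f y))"

end

theory Submission
  imports Defs
begin

lemma dep_exists:
  "finite J \<Longrightarrow> card J > n \<Longrightarrow> (\<forall>j\<in>J. \<forall>i\<ge>n. v j i = (0::int)) \<Longrightarrow>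
   \<exists>c. (\<forall>i. (\<Sum>j\<in>J. c j * v j i) = 0) \<and> (\<exists>j\<in>J. c j \<noteq> 0)"
proof (induction n arbitrary: J v)
  case 0
  then have "J \<noteq> {}" by auto
  then obtain j where "j \<in> J" by auto
  moreover have "\<forall>i. (\<Sum>j\<in>J. (1::int) * v j i) = 0" using 0 by simp
  ultimately show ?case by (intro exI[of _ "\<lambda>_. 1"]) auto
next
  case (Suc n)
  show ?case
  proof (cases "\<forall>j\<in>J. v j n = 0")
    case True
    have "\<forall>j\<in>J. \<forall>i\<ge>n. v j i = 0"
    proof (intro ballI allI impI)
      fix j i assume "j \<in> J" "n \<le> i"
      then show "v j i = 0" using True Suc.prems(3)
        by (cases "i = n") auto
    qed
    then show ?thesis using Suc by auto
  next
    case False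
    then obtain k where k: "k \<in> J" "v k n \<noteq> 0" by auto
    define a where "a = v k n"
    define w where "w = (\<lambda>j i. a * v j i - v j n * v k i)"
    have cJ: "card (J - {k}) > n" using Suc.prems k by auto
    have sw: "\<forall>j\<in>J - {k}. \<forall>i\<ge>n. w j i = 0"
    proof (intro ballI allI impI)
      fix j i assume "j \<in> J - {k}" "n \<le> i"
      then show "w j i = 0" using Suc.prems(3) k unfolding w_def a_def
        by (cases "i = n") auto
    qed
    obtain c' where c': "\<forall>i. (\<Sum>j\<in>J - {k}. c' j * w j i) = 0" "\<exists>j\<in>J - {k}. c' j \<noteq> 0"
      using Suc.IH[OF _ cJ sw] Suc.prems(1) by auto
    define c where "c = (\<lambda>j. if j = k then - (\<Sum>j\<in>J - {k}. c' j * v j n) else c' j * a)"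
    have "(\<Sum>j\<in>J. c j * v j i) = 0" for i
    proof -
      have "(\<Sum>j\<in>J. c j * v j i) = c k * v k i + (\<Sum>j\<in>J - {k}. c j * v j i)"
        using k Suc.prems(1) by (simp add: sum.remove)
      also have "(\<Sum>j\<in>J - {k}. c j * v j i) = (\<Sum>j\<in>J - {k}. c' j * a * v j i)"
        unfolding c_def by (rule sum.cong) auto
      also have "c k * v k i = - (\<Sum>j\<in>J - {k}. c' j * v j n * v k i)"
        unfolding c_def by (simp add: sum_distrib_right)
      finally have "(\<Sum>j\<in>J. c j * v j i) = (\<Sum>j\<in>J - {k}. c' j * a * v j i - c' j * v j n * v k i)"
        by (simp add: sum_subtractf)
      also have "\<dots> = (\<Sum>j\<in>J - {k}. c' j * w j i)"
        unfolding w_def by (rule sum.cong) (auto simp: algebra_simps)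
      finally show ?thesis using c' by simp
    qed
    moreover have "\<exists>j\<in>J. c j \<noteq> 0" using c'(2) k unfolding c_def a_def by auto
    ultimately show ?thesis by blast
  qed
qed

lemma indep_bound:
  assumes "\<forall>v\<in>set vs. \<forall>i\<ge>n. v i = (0::int)" "int_lin_indep vs"
  shows "length vs \<le> n"
proof (rule ccontr)
  assume "\<not> length vs \<le> n"
  then have "card {..<length vs} > n" by simp
  moreover have "\<forall>j\<in>{..<length vs}. \<forall>i\<ge>n. (vs ! j) i = 0" using assms(1) by auto
  ultimately obtain c where "\<forall>i. (\<Sum>j\<in>{..<length vs}. c j * (vs ! j) i) = 0" "\<exists>j\<in>{..<length vs}. c j \<noteq> 0"
    using dep_exists[of "{..<length vs}" n "\<lambda>j. vs ! j"] by auto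
  then show False using assms(2) unfolding int_lin_indep_def by auto
qed

definition fr :: "nat \<Rightarrow> (nat \<Rightarrow> nat) set" where
  "fr d = {x. \<forall>i\<ge>d. x i = 0}"

definition ev :: "nat \<Rightarrow> nat \<Rightarrow> nat" where
  "ev j = (\<lambda>i. if i = j then 2 else 0)"

lemma rank_lemma:
  assumes "submonoid_of_free d H" "\<forall>j<d. ev j \<in> H"
  shows "in_C d H"
proof -
  define vs where "vs = map (\<lambda>j. \<lambda>i. if i = j then (2::int) else 0) [0..<d]"
  have "set vs \<subseteq> groth_group H"
  proof
    fix v assume "v \<in> set vs"
    then obtain j where j: "j < d" "v = (\<lambda>i. if i = j then (2::int) else 0)" unfolding vs_def by auto
    have "v = (\<lambda>i. int (ev j i) - int ((0::nat\<Rightarrow>nat) i))" unfolding j ev_def by auto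
    moreover have "(0::nat\<Rightarrow>nat) \<in> H" using assms(1) unfolding submonoid_of_free_def by auto
    ultimately show "v \<in> groth_group H" using assms(2) j unfolding groth_group_def by blast
  qed
  moreover have "int_lin_indep vs"
    unfolding int_lin_indep_def
  proof (intro allI impI)
    fix c :: "nat \<Rightarrow> int" and j
    assume h: "\<forall>i. (\<Sum>k<length vs. c k * (vs ! k) i) = 0" and "j < length vs"
    then have jd: "j < d" unfolding vs_def by simp
    have "(\<Sum>k<length vs. c k * (vs ! k) j) = (\<Sum>k<d. if k = j then c k * 2 else 0)"
      unfolding vs_def by (rule sum.cong) auto
    also have "\<dots> = c j * 2" using jd by simp
    finally show "c j = 0" using h by simp
  qed
  moreover have "length vs = d" unfolding vs_def by simp
  moreover have "\<forall>vs. set vs \<subseteq> groth_group H \<and> int_lin_indep vs \<longrightarrow> length vs \<le> d"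
  proof (intro allI impI)
    fix ws assume h: "set ws \<subseteq> groth_group H \<and> int_lin_indep ws"
    have "\<forall>v\<in>set ws. \<forall>i\<ge>d. v i = (0::int)"
    proof (intro ballI allI impI)
      fix v i assume "v \<in> set ws" "d \<le> i"
      then obtain x y where "x \<in> H" "y \<in> H" "v = (\<lambda>i. int (x i) - int (y i))"
        using h unfolding groth_group_def by blast
      moreover have "x i = 0" "y i = 0" using assms(1) \<open>d \<le> i\<close> \<open>x \<in> H\<close> \<open>y \<in> H\<close>
        unfolding submonoid_of_free_def by blast+
      ultimately show "v i = 0" by simp
    qed
    then show "length ws \<le> d" using indep_bound h by blast
  qed
  ultimately show ?thesis unfolding in_C_def has_rank_def using assms(1) by blast
qed


lemma nonzero_deg:
  assumes "c \<in> fr n" "c \<noteq> 0"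
  shows "(\<Sum>i<n. c i) > 0"
proof -
  obtain i where i: "c i \<noteq> 0" using assms(2) by (auto simp: fun_eq_iff)
  then have "i < n" using assms(1) unfolding fr_def by (metis (mono_tags, lifting) mem_Collect_eq not_le)
  then have "c i \<le> (\<Sum>i<n. c i)" by (intro member_le_sum) auto
  then show ?thesis using i by simp
qed

lemma factor_exists:
  assumes "submonoid_of_free n H" "x \<in> H"
  shows "\<exists>as. set as \<subseteq> atoms H \<and> sum_list as = x"
  using assms(2)
proof (induction "\<Sum>i<n. x i" arbitrary: x rule: less_induct)
  case less
  have Hfr: "H \<subseteq> fr n" using assms(1) unfolding submonoid_of_free_def fr_def by auto
  show ?case
  proof (cases "x = 0")
    case True
    then show ?thesis by (intro exI[of _ "[]"]) auto
  next
    case False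
    show ?thesis
    proof (cases "x \<in> atoms H")
      case True
      then show ?thesis by (intro exI[of _ "[x]"]) auto
    next
      case na: False
      then obtain b c where bc: "b \<in> H" "c \<in> H" "b \<noteq> 0" "c \<noteq> 0" "x = b + c"
        using False less.prems unfolding atoms_def by auto
      have dx: "(\<Sum>i<n. x i) = (\<Sum>i<n. b i) + (\<Sum>i<n. c i)"
        using bc(5) by (simp add: sum.distrib)
      have "(\<Sum>i<n. b i) > 0" "(\<Sum>i<n. c i) > 0"
        using nonzero_deg bc Hfr by blast+
      then obtain bs cs where "set bs \<subseteq> atoms H" "sum_list bs = b" "set cs \<subseteq> atoms H" "sum_list cs = c"
        using less.hyps[of b] less.hyps[of c] bc dx by auto
      then show ?thesis using bc(5) by (intro exI[of _ "bs @ cs"]) auto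
    qed
  qed
qed

lemma lengths_eq:
  assumes "submonoid_of_free n H" "x \<in> H" "\<forall>x y. w (x + y) = w x + (w y :: nat)"
    "\<forall>a\<in>atoms H. w a = m" "m > 0"
  shows "lengths H x = {w x div m}"
proof -
  have w0: "w 0 = 0" using assms(3)[rule_format, of 0 0] by simp
  have wl: "set as \<subseteq> atoms H \<Longrightarrow> w (sum_list as) = m * length as" for as
    using assms(4) by (induction as) (auto simp: w0 assms(3))
  have "lengths H x \<subseteq> {w x div m}"
    unfolding lengths_def using wl assms(5) by auto
  moreover obtain as where "set as \<subseteq> atoms H" "sum_list as = x"
    using factor_exists assms(1,2) by blast
  then have "length as \<in> lengths H x" unfolding lengths_def by auto
  ultimately show ?thesis using subset_singletonD by fastforce
qed

definition H2 :: "nat \<Rightarrow> (nat \<Rightarrow> nat) set" where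
  "H2 d = {x \<in> fr d. even (x 0 + x 1)}"

definition l1 :: "nat \<Rightarrow> (nat \<Rightarrow> nat) \<Rightarrow> nat" where
  "l1 d x = (\<Sum>i<d. x i)"

definition l2 :: "nat \<Rightarrow> (nat \<Rightarrow> nat) \<Rightarrow> nat" where
  "l2 d x = x 0 + x 1 + 2 * (\<Sum>i\<in>{2..<d}. x i)"

definition e1 :: "nat \<Rightarrow> nat \<Rightarrow> nat" where
  "e1 j = (\<lambda>i. if i = j then 1 else 0)"

lemma sub1: "submonoid_of_free d (fr d)"
  unfolding submonoid_of_free_def fr_def by auto

lemma sub2: "submonoid_of_free d (H2 d)"
  unfolding submonoid_of_free_def fr_def H2_def by auto

lemma l1_add: "\<forall>x y. l1 d (x + y) = l1 d x + l1 d y"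
  unfolding l1_def by (simp add: sum.distrib)

lemma l2_add: "\<forall>x y. l2 d (x + y) = l2 d x + l2 d y"
  unfolding l2_def by (simp add: sum.distrib algebra_simps)

lemma atoms1: "a \<in> atoms (fr d) \<Longrightarrow> \<exists>i<d. a = e1 i"
proof -
  assume a: "a \<in> atoms (fr d)"
  then have afr: "a \<in> fr d" "a \<noteq> 0" unfolding atoms_def by auto
  then obtain i where i: "a i \<noteq> 0" by (auto simp: fun_eq_iff)
  then have id: "i < d" using afr unfolding fr_def by (metis (mono_tags, lifting) mem_Collect_eq not_le)
  show ?thesis
  proof (rule ccontr)
    assume "\<not> ?thesis"
    then have ne: "a \<noteq> e1 i" using id by auto
    define c where "c = (\<lambda>j. if j = i then a j - 1 else a j)"
    have "c \<noteq> 0"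
    proof
      assume "c = 0"
      then have "a = e1 i" using i unfolding c_def e1_def fun_eq_iff
        by (metis diff_is_0_eq le_neq_implies_less less_one zero_fun_apply)
      then show False using ne by simp
    qed
    moreover have "e1 i \<noteq> 0" unfolding e1_def by (auto simp: fun_eq_iff)
    moreover have "a = e1 i + c" using i unfolding c_def e1_def by (auto simp: fun_eq_iff)
    moreover have "c \<in> fr d" "e1 i \<in> fr d" using afr id unfolding c_def e1_def fr_def by auto
    ultimately show False using a unfolding atoms_def by blast
  qed
qed

lemma l1_e1: "i < d \<Longrightarrow> l1 d (e1 i) = 1"
  unfolding l1_def e1_def by simp

lemma pos2: assumes "x \<in> H2 d" "x \<noteq> 0" shows "l2 d x \<ge> 2"
proof -
  obtain i where i: "x i \<noteq> 0" using assms(2) by (auto simp: fun_eq_iff)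
  then have id: "i < d" using assms(1) unfolding fr_def H2_def by (metis (mono_tags, lifting) mem_Collect_eq not_le)
  have ev: "even (l2 d x)" using assms(1) unfolding l2_def H2_def by auto
  have "l2 d x > 0"
  proof (cases "i \<le> 1")
    case True
    then have "x 0 + x 1 > 0" using i by (cases i) auto
    then show ?thesis unfolding l2_def by simp
  next
    case False
    then have "x i \<le> (\<Sum>i\<in>{2..<d}. x i)" using id by (intro member_le_sum) auto
    then show ?thesis using i unfolding l2_def by simp
  qed
  moreover obtain k where "l2 d x = 2 * k" using ev by blast
  ultimately show ?thesis by simp
qed

lemma atoms2: "a \<in> atoms (H2 d) \<Longrightarrow> l2 d a = 2"
proof -
  assume a: "a \<in> atoms (H2 d)"
  then have aH: "a \<in> H2 d" "a \<noteq> 0" unfolding atoms_def by auto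
  have ev: "even (l2 d a)" using aH unfolding l2_def H2_def by auto
  have ge: "l2 d a \<ge> 2" using pos2 aH by blast
  show ?thesis
  proof (rule ccontr)
    assume "l2 d a \<noteq> 2"
    then have ge4: "l2 d a \<ge> 4"
    proof -
      obtain k where k: "l2 d a = 2 * k" using ev by blast
      then show ?thesis using ge \<open>l2 d a \<noteq> 2\<close> by simp
    qed
    have "\<exists>b c. b \<in> H2 d \<and> c \<in> H2 d \<and> b \<noteq> 0 \<and> c \<noteq> 0 \<and> a = b + c"
    proof (cases "\<exists>i\<in>{2..<d}. a i \<noteq> 0")
      case True
      then obtain i where i: "i \<in> {2..<d}" "a i \<noteq> 0" by auto
      define c where "c = (\<lambda>j. if j = i then a j - 1 else a j)"
      have "c 0 = a 0" "c 1 = a 1" using i unfolding c_def by auto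
      then have "c \<in> H2 d" using aH i unfolding c_def H2_def fr_def by auto
      moreover have "e1 i \<in> H2 d" using i unfolding e1_def H2_def fr_def by auto
      moreover have "e1 i \<noteq> 0" unfolding e1_def by (auto simp: fun_eq_iff)
      moreover have "a = e1 i + c" using i unfolding c_def e1_def by (auto simp: fun_eq_iff)
      moreover have "c \<noteq> 0"
      proof
        assume "c = 0"
        then have "l2 d a = l2 d (e1 i)" using \<open>a = e1 i + c\<close> by simp
        also have "l2 d (e1 i) = 2" using i unfolding l2_def e1_def by simp
        finally show False using ge4 by simp
      qed
      ultimately show ?thesis by blast
    next
      case False
      then have "(\<Sum>i\<in>{2..<d}. a i) = 0" by simp
      then have s4: "a 0 + a 1 \<ge> 4" using ge4 unfolding l2_def by simp
      show ?thesis
      proof (cases "a 0 \<ge> 2")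
        case True
        define c where "c = (\<lambda>j. if j = 0 then a j - 2 else a j)"
        have "c \<in> H2 d" using aH True unfolding c_def H2_def fr_def by auto
        moreover have "0 < d"
        proof (rule ccontr)
          assume "\<not> 0 < d" then have "a 0 = 0" using aH unfolding H2_def fr_def by auto
          then show False using True by simp
        qed
        then have "ev 0 \<in> H2 d" unfolding ev_def H2_def fr_def by auto
        moreover have "ev 0 \<noteq> 0" unfolding ev_def by (auto simp: fun_eq_iff)
        moreover have "a = ev 0 + c" using True unfolding c_def ev_def by (auto simp: fun_eq_iff)
        moreover have "c \<noteq> 0"
        proof
          assume "c = 0"
          then have "c 0 + c 1 = 0" by simp
          then show False using s4 True unfolding c_def by simp
        qed
        ultimately show ?thesis by blast
      next
        case False
        then have T: "a 1 \<ge> 2" using s4 by simp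
        define c where "c = (\<lambda>j. if j = 1 then a j - 2 else a j)"
        have "c \<in> H2 d" using aH T unfolding c_def H2_def fr_def by auto
        moreover have "1 < d"
        proof (rule ccontr)
          assume "\<not> 1 < d" then have "a 1 = 0" using aH unfolding H2_def fr_def by auto
          then show False using T by simp
        qed
        then have "ev 1 \<in> H2 d" unfolding ev_def H2_def fr_def by auto
        moreover have "ev 1 \<noteq> 0" unfolding ev_def by (auto simp: fun_eq_iff)
        moreover have "a = ev 1 + c" using T unfolding c_def ev_def by (auto simp: fun_eq_iff)
        moreover have "c \<noteq> 0"
        proof
          assume "c = 0"
          then have "c 0 + c 1 = 0" by simp
          then show False using s4 T unfolding c_def by simp
        qed
        ultimately show ?thesis by blast
      qed
    qed
    then show False using a unfolding atoms_def by blast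
  qed
qed


lemma sys1: assumes "0 < d" shows "system_of_lengths (fr d) = range (\<lambda>k. {k})"
proof -
  have at: "\<forall>a\<in>atoms (fr d). l1 d a = 1" using atoms1 l1_e1 by blast
  have L: "x \<in> fr d \<Longrightarrow> lengths (fr d) x = {l1 d x}" for x
    using lengths_eq[OF sub1 _ l1_add at] by simp
  have "{k} \<in> system_of_lengths (fr d)" for k
  proof -
    define x where "x = (\<lambda>j::nat. if j = 0 then k else 0)"
    have "x \<in> fr d" using assms unfolding x_def fr_def by auto
    moreover have "l1 d x = k" using assms unfolding x_def l1_def by simp
    ultimately show ?thesis unfolding system_of_lengths_def using L by (metis image_eqI)
  qed
  moreover have "system_of_lengths (fr d) \<subseteq> range (\<lambda>k. {k})"
    unfolding system_of_lengths_def using L by auto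
  ultimately show ?thesis by blast
qed

lemma sys2: assumes "0 < d" shows "system_of_lengths (H2 d) = range (\<lambda>k. {k})"
proof -
  have at: "\<forall>a\<in>atoms (H2 d). l2 d a = 2" using atoms2 by blast
  have L: "x \<in> H2 d \<Longrightarrow> lengths (H2 d) x = {l2 d x div 2}" for x
    using lengths_eq[OF sub2 _ l2_add at] by simp
  have "{k} \<in> system_of_lengths (H2 d)" for k
  proof -
    define x where "x = (\<lambda>j::nat. if j = 0 then 2 * k else 0)"
    have "x \<in> H2 d" using assms unfolding x_def fr_def H2_def by auto
    moreover have "l2 d x = 2 * k" unfolding x_def l2_def by simp
    ultimately show ?thesis unfolding system_of_lengths_def using L by (metis image_eqI nonzero_mult_div_cancel_left zero_neq_numeral)
  qed
  moreover have "system_of_lengths (H2 d) \<subseteq> range (\<lambda>k. {k})"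
    unfolding system_of_lengths_def using L by auto
  ultimately show ?thesis by blast
qed

lemma atom_l2: assumes "x \<in> H2 d" "x \<noteq> 0" "l2 d x = 2" shows "x \<in> atoms (H2 d)"
proof -
  have "\<not> (\<exists>b\<in>H2 d. \<exists>c\<in>H2 d. b \<noteq> 0 \<and> c \<noteq> 0 \<and> x = b + c)"
  proof
    assume "\<exists>b\<in>H2 d. \<exists>c\<in>H2 d. b \<noteq> 0 \<and> c \<noteq> 0 \<and> x = b + c"
    then obtain b c where "b \<in> H2 d" "c \<in> H2 d" "b \<noteq> 0" "c \<noteq> 0" "x = b + c" by blast
    then have "l2 d b \<ge> 2" "l2 d c \<ge> 2" "l2 d x = l2 d b + l2 d c" using pos2 l2_add by auto
    then show False using assms(3) by simp
  qed
  then show ?thesis using assms unfolding atoms_def by blast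
qed

lemma atoms1_prop:
  assumes "a \<in> atoms (fr d)" "b \<in> atoms (fr d)" "c \<in> atoms (fr d)" "e \<in> atoms (fr d)" "a + b = c + e"
  shows "a = c \<or> a = e"
proof -
  obtain i j k l where "a = e1 i" "b = e1 j" "c = e1 k" "e = e1 l" using atoms1 assms by metis
  moreover from this have "(a + b) i = (c + e) i" using assms(5) by simp
  ultimately show ?thesis unfolding e1_def by (auto split: if_splits)
qed

lemma pullback_atom:
  assumes "bij_betw f H H'" "\<forall>x\<in>H. \<forall>y\<in>H. f (x + y) = f x + f y" "0 \<in> H" "f 0 = 0"
    "y \<in> atoms H'"
  shows "inv_into H f y \<in> atoms H" "f (inv_into H f y) = y"
proof -
  have yH: "y \<in> H'" "y \<noteq> 0" using assms(5) unfolding atoms_def by auto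
  let ?x = "inv_into H f y"
  show fx: "f ?x = y" using assms(1) yH by (simp add: bij_betw_inv_into_right)
  have xH: "?x \<in> H" using assms(1) yH unfolding bij_betw_def by (metis inv_into_into)
  have nz: "z \<in> H \<Longrightarrow> z \<noteq> 0 \<Longrightarrow> f z \<noteq> 0" for z
    using assms(1,3,4) unfolding bij_betw_def inj_on_def by metis
  have "?x \<noteq> 0" using fx yH assms(4) by auto
  moreover have "\<not> (\<exists>b\<in>H. \<exists>c\<in>H. b \<noteq> 0 \<and> c \<noteq> 0 \<and> ?x = b + c)"
  proof
    assume "\<exists>b\<in>H. \<exists>c\<in>H. b \<noteq> 0 \<and> c \<noteq> 0 \<and> ?x = b + c"
    then obtain b c where bc: "b \<in> H" "c \<in> H" "b \<noteq> 0" "c \<noteq> 0" "?x = b + c" by blast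
    then have "y = f b + f c" using fx assms(2) by metis
    moreover have "f b \<in> H'" "f c \<in> H'" using bc assms(1) by (auto simp: bij_betw_def)
    ultimately show False using assms(5) nz bc unfolding atoms_def by blast
  qed
  ultimately show "?x \<in> atoms H" using xH unfolding atoms_def by blast
qed

lemma not_iso: assumes "d \<ge> 2" shows "\<not> monoid_iso (fr d) (H2 d)"
proof
  assume "monoid_iso (fr d) (H2 d)"
  then obtain f where f: "bij_betw f (fr d) (H2 d)" "\<forall>x\<in>fr d. \<forall>y\<in>fr d. f (x + y) = f x + f y"
    unfolding monoid_iso_def by blast
  have z: "(0::nat\<Rightarrow>nat) \<in> fr d" unfolding fr_def by simp
  have "f 0 = f 0 + f 0" using f(2) z by (metis add.right_neutral)
  then have f0: "f 0 = 0" by (metis add_cancel_right_right)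
  define u where "u = (\<lambda>j::nat. if j = 0 \<or> j = 1 then (1::nat) else 0)"
  have uA: "u \<in> atoms (H2 d)"
    by (rule atom_l2) (use assms in \<open>auto simp: u_def H2_def fr_def l2_def fun_eq_iff\<close>)
  have pA: "ev 0 \<in> atoms (H2 d)"
    by (rule atom_l2) (use assms in \<open>auto simp: ev_def H2_def fr_def l2_def fun_eq_iff\<close>)
  have qA: "ev 1 \<in> atoms (H2 d)"
    by (rule atom_l2) (use assms in \<open>auto simp: ev_def H2_def fr_def l2_def fun_eq_iff\<close>)
  let ?g = "inv_into (fr d) f"
  note P = pullback_atom[OF f z f0]
  have gH: "?g u \<in> fr d" "?g (ev 0) \<in> fr d" "?g (ev 1) \<in> fr d"
    using P(1) uA pA qA unfolding atoms_def by auto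
  have "u + u = ev 0 + ev 1" by (simp add: u_def ev_def fun_eq_iff)
  then have "f (?g u + ?g u) = f (?g (ev 0) + ?g (ev 1))"
    using f(2) gH P(2) uA pA qA by simp
  moreover have "?g u + ?g u \<in> fr d" "?g (ev 0) + ?g (ev 1) \<in> fr d"
    using gH unfolding fr_def by auto
  ultimately have "?g u + ?g u = ?g (ev 0) + ?g (ev 1)"
    using f(1) unfolding bij_betw_def inj_on_def by blast
  then have "?g u = ?g (ev 0) \<or> ?g u = ?g (ev 1)"
    using atoms1_prop P uA pA qA by blast
  then have "u = ev 0 \<or> u = ev 1" using P uA pA qA by metis
  then show False unfolding u_def ev_def fun_eq_iff by (metis one_neq_zero numeral_eq_one_iff semiring_norm(85))
qed

theorem proposition4p10:
  fixes d :: nat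
  assumes "d \<ge> 2"
  shows "\<exists>H H' :: (nat \<Rightarrow> nat) set. in_C d H \<and> in_C d H' \<and>
           system_of_lengths H = system_of_lengths H' \<and> \<not> monoid_iso H H'"
proof (intro exI conjI)
  show "in_C d (fr d)" by (rule rank_lemma[OF sub1]) (auto simp: ev_def fr_def)
  show "in_C d (H2 d)" by (rule rank_lemma[OF sub2]) (auto simp: ev_def fr_def H2_def)
  show "system_of_lengths (fr d) = system_of_lengths (H2 d)" using sys1 sys2 assms by simp
  show "\<not> monoid_iso (fr d) (H2 d)" using not_iso assms by blast
qed

end
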